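(* Let $B(t,x)=\sum_T t^{\mathrm{da}(T)}x^{|T|}$, the sum over all binary trees $T$ (including the empty tree), where $|T|$ is the number of nodes. Then $$B(t,x)=1+\frac{1-\sqrt{1+4x\left(x-\frac{1-\sqrt{1-4tx}}{t}\right)}}{2x}.$$
   Context: A binary tree is a rooted tree in which each node has at most two children, distinguished as left child and right child. The address of a node is the word over $\{L,R\}$ recording the sequence of left/right children along the path from the root to the node (the root has the empty address). The complement of an address swaps $L$ and $R$. Two nodes are mirror images if their addresses are complements of each other (so the root is its own mirror image). The degree of asymmetry $\mathrm{da}(T)$ is the number of nodes of $T$ that are not mirror images of any node of $T$. *)

theory Defs
  imports "HOL-Analysis.Analysis"
begin

datatype btree = E | N btree btree

text \<open>Addresses of the nodes of a tree, as words over {L,R};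
L is encoded as False and R as True. The root has address [].\<close>
fun addrs :: "btree \<Rightarrow> bool list set" where
  "addrs E = {}"
| "addrs (N l r) = insert [] (Cons False ` addrs l \<union> Cons True ` addrs r)"

definition compl_addr :: "bool list \<Rightarrow> bool list" where
  "compl_addr a = map Not a"

definition nnodes :: "btree \<Rightarrow> nat" where
  "nnodes T = card (addrs T)"

definition da :: "btree \<Rightarrow> nat" where
  "da T = card {a \<in> addrs T. compl_addr a \<notin> addrs T}"

end

theory Submission
  imports Defs
begin

lemma finite_addrs[simp]: "finite (addrs T)"
  by (induction T) auto

lemma compl_Cons[simp]: "compl_addr (b # w) = (\<not> b) # compl_addr w"
  by (simp add: compl_addr_def)

lemma compl_Nil[simp]: "compl_addr [] = []"
  by (simp add: compl_addr_def)

lemma nnodes_E[simp]: "nnodes E = 0"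
  by (simp add: nnodes_def)

lemma card_two_images:
  assumes "finite A" "finite B"
  shows "card (Cons False ` A \<union> Cons True ` B) = card A + card B"
proof -
  have "card (Cons False ` A \<union> Cons True ` B) = card (Cons False ` A) + card (Cons True ` B)"
    by (rule card_Un_disjoint) (use assms in auto)
  also have "\<dots> = card A + card B"
    by (simp add: card_image)
  finally show ?thesis .
qed

lemma nnodes_N[simp]: "nnodes (N l r) = Suc (nnodes l + nnodes r)"
proof -
  have "[] \<notin> Cons False ` addrs l \<union> Cons True ` addrs r" by auto
  then show ?thesis
    by (simp add: nnodes_def card_two_images)
qed

definition h :: "btree \<Rightarrow> btree \<Rightarrow> nat" where
  "h a b = card {w \<in> addrs a. compl_addr w \<notin> addrs b}"

lemma h_le: "h a b \<le> nnodes a"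
  unfolding h_def nnodes_def by (rule card_mono) auto

lemma da_le: "da T \<le> nnodes T"
  unfolding da_def nnodes_def by (rule card_mono) auto

lemma h_E1[simp]: "h E b = 0"
  by (simp add: h_def)

lemma h_E2[simp]: "h a E = nnodes a"
  by (simp add: h_def nnodes_def)

lemma h_NN: "h (N a1 a2) (N b1 b2) = h a1 b2 + h a2 b1"
proof -
  have "{w \<in> addrs (N a1 a2). compl_addr w \<notin> addrs (N b1 b2)} =
    Cons False ` {w \<in> addrs a1. compl_addr w \<notin> addrs b2} \<union>
    Cons True ` {w \<in> addrs a2. compl_addr w \<notin> addrs b1}"
    by auto
  then show ?thesis unfolding h_def by (simp add: card_two_images)
qed

lemma da_N: "da (N l r) = h l r + h r l"
proof -
  have "{w \<in> addrs (N l r). compl_addr w \<notin> addrs (N l r)} =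
    Cons False ` {w \<in> addrs l. compl_addr w \<notin> addrs r} \<union>
    Cons True ` {w \<in> addrs r. compl_addr w \<notin> addrs l}"
    by auto
  then show ?thesis unfolding h_def da_def by (simp add: card_two_images)
qed


lemma has_sum_prod:
  fixes f :: "'a \<Rightarrow> real" and g :: "'b \<Rightarrow> real"
  assumes "(f has_sum a) A" "(g has_sum b) B"
    and "(\<lambda>(x,y). f x * g y) summable_on A \<times> B"
  shows "((\<lambda>(x,y). f x * g y) has_sum a * b) (A \<times> B)"
proof (rule has_sum_SigmaI[where g = "\<lambda>x. f x * b"])
  show "((\<lambda>y. case (x, y) of (x, y) \<Rightarrow> f x * g y) has_sum f x * b) B" for x
    using has_sum_cmult_right[OF assms(2), of "f x"] by simp
  show "((\<lambda>x. f x * b) has_sum a * b) A"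
    using has_sum_cmult_left[OF assms(1)] .
qed (use assms(3) in auto)

lemma abs_summable_prod:
  fixes f :: "'a \<Rightarrow> real" and g :: "'b \<Rightarrow> real"
  assumes "(\<lambda>x. norm (f x)) summable_on A" "(\<lambda>x. norm (g x)) summable_on B"
  shows "(\<lambda>z. norm ((\<lambda>(x,y). f x * g y) z)) summable_on A \<times> B"
proof -
  let ?SF = "infsum (\<lambda>x. norm (f x)) A" and ?SG = "infsum (\<lambda>x. norm (g x)) B"
  have "bdd_above (sum (\<lambda>z. norm (case z of (x,y) \<Rightarrow> f x * g y)) ` {F. F \<subseteq> A \<times> B \<and> finite F})"
  proof (rule bdd_aboveI2)
    fix F assume F: "F \<in> {F. F \<subseteq> A \<times> B \<and> finite F}"
    then have fin: "finite F" and sub: "F \<subseteq> A \<times> B" by auto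
    have "(\<Sum>z\<in>F. norm (case z of (x,y) \<Rightarrow> f x * g y)) \<le>
          (\<Sum>z\<in>fst ` F \<times> snd ` F. norm (case z of (x,y) \<Rightarrow> f x * g y))"
    proof (rule sum_mono2)
      show "F \<subseteq> fst ` F \<times> snd ` F"
        by (auto intro: rev_image_eqI)
    qed (use fin in auto)
    also have "\<dots> = (\<Sum>x\<in>fst ` F. norm (f x)) * (\<Sum>y\<in>snd ` F. norm (g y))"
      by (simp add: sum_product sum.cartesian_product norm_mult case_prod_beta abs_mult)
    also have "\<dots> \<le> ?SF * ?SG"
    proof (rule mult_mono)
      show "(\<Sum>x\<in>fst ` F. norm (f x)) \<le> ?SF"
        by (rule finite_sum_le_infsum) (use assms fin sub in auto)
      show "(\<Sum>x\<in>snd ` F. norm (g x)) \<le> ?SG"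
        by (rule finite_sum_le_infsum) (use assms fin sub in auto)
    qed (auto intro: infsum_nonneg sum_nonneg)
    finally show "(\<Sum>z\<in>F. norm (case z of (x,y) \<Rightarrow> f x * g y)) \<le> ?SF * ?SG" .
  qed
  then show ?thesis by (rule nonneg_bdd_above_summable_on[rotated]) auto
qed

abbreviation NN :: "btree \<times> btree \<Rightarrow> btree" where "NN \<equiv> (\<lambda>(l,r). N l r)"

lemma UNIV_btree: "UNIV = insert E (range NN)"
proof -
  have "T \<in> insert E (range NN)" for T by (cases T) auto
  then show ?thesis by auto
qed

lemma inj_NN: "inj NN"
  by (auto simp: inj_def)

lemma has_sum_decomp:
  fixes f :: "btree \<Rightarrow> real"
  assumes "((f \<circ> NN) has_sum S) UNIV"
  shows "(f has_sum (f E + S)) UNIV"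
proof -
  have "(f has_sum S) (range NN)"
    using assms has_sum_reindex[OF inj_NN, of f S] by simp
  then have "(f has_sum (f E + S)) (insert E (range NN))"
    by (intro has_sum_insert) auto
  then show ?thesis using UNIV_btree by simp
qed

fun trees_upto :: "nat \<Rightarrow> btree set" where
  "trees_upto 0 = {E}"
| "trees_upto (Suc k) = insert E (NN ` (trees_upto k \<times> trees_upto k))"

fun height :: "btree \<Rightarrow> nat" where
  "height E = 0"
| "height (N l r) = Suc (max (height l) (height r))"

lemma finite_trees_upto: "finite (trees_upto k)"
  by (induction k) auto

lemma in_trees_upto: "height T \<le> k \<Longrightarrow> T \<in> trees_upto k"
proof (induction T arbitrary: k)
  case E then show ?case by (cases k) auto
next
  case (N l r)
  then obtain k' where k: "k = Suc k'" by (cases k) auto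
  with N show ?case by auto
qed

lemma sum_trees_upto:
  fixes c :: real
  assumes "0 \<le> c" "c \<le> 1/4"
  shows "(\<Sum>T\<in>trees_upto k. c ^ nnodes T) \<le> 2"
proof (induction k)
  case 0 then show ?case by simp
next
  case (Suc k)
  let ?S = "\<Sum>T\<in>trees_upto k. c ^ nnodes T"
  have "E \<notin> NN ` (trees_upto k \<times> trees_upto k)" by auto
  then have "(\<Sum>T\<in>trees_upto (Suc k). c ^ nnodes T) =
     1 + (\<Sum>T\<in>NN ` (trees_upto k \<times> trees_upto k). c ^ nnodes T)"
    by (simp add: finite_trees_upto)
  also have "(\<Sum>T\<in>NN ` (trees_upto k \<times> trees_upto k). c ^ nnodes T) =
      (\<Sum>z\<in>trees_upto k \<times> trees_upto k. c ^ nnodes (NN z))"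
    by (rule sum.reindex_cong[OF inj_on_subset[OF inj_NN]]) auto
  also have "\<dots> = c * (?S * ?S)"
    by (simp add: sum_product sum.cartesian_product sum_distrib_left case_prod_beta power_add mult_ac)
  also have "\<dots> \<le> c * 4"
  proof -
    have "0 \<le> ?S" using assms by (auto intro: sum_nonneg)
    then have "?S * ?S \<le> 2 * 2" using Suc by (intro mult_mono) auto
    then show ?thesis using assms by (intro mult_left_mono) auto
  qed
  finally show ?case using assms by simp
qed

lemma cat_summable:
  fixes c :: real
  assumes "0 \<le> c" "c \<le> 1/4"
  shows "(\<lambda>T. c ^ nnodes T) summable_on UNIV" "infsum (\<lambda>T. c ^ nnodes T) UNIV \<le> 2"
proof -
  have bd: "sum (\<lambda>T. c ^ nnodes T) F \<le> 2" if "finite F" for F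
  proof -
    define k where "k = Max (height ` F)"
    have "F \<subseteq> trees_upto k"
      using that by (auto intro!: in_trees_upto simp: k_def)
    then have "sum (\<lambda>T. c ^ nnodes T) F \<le> sum (\<lambda>T. c ^ nnodes T) (trees_upto k)"
      using assms by (intro sum_mono2) (auto simp: finite_trees_upto)
    also have "\<dots> \<le> 2" by (rule sum_trees_upto[OF assms])
    finally show ?thesis .
  qed
  have "bdd_above (sum (\<lambda>T. c ^ nnodes T) ` {F. F \<subseteq> UNIV \<and> finite F})"
    by (rule bdd_aboveI2[where M=2]) (use bd in auto)
  then have hs: "((\<lambda>T. c ^ nnodes T) has_sum (SUP F\<in>{F. finite F \<and> F\<subseteq>UNIV}. sum (\<lambda>T. c ^ nnodes T) F)) UNIV"
    using assms by (intro nonneg_bdd_above_has_sum) auto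
  then show "(\<lambda>T. c ^ nnodes T) summable_on UNIV" by (auto simp: has_sum_iff)
  have "(SUP F\<in>{F. finite F \<and> F\<subseteq>UNIV}. sum (\<lambda>T. c ^ nnodes T) F) \<le> 2"
    by (rule cSUP_least) (use bd in auto)
  then show "infsum (\<lambda>T. c ^ nnodes T) UNIV \<le> 2" using hs by (simp add: has_sum_iff)
qed


lemma catalan:
  fixes y :: real
  assumes "\<bar>y\<bar> \<le> 1/4"
  defines "G \<equiv> infsum (\<lambda>T. y ^ nnodes T) UNIV"
  shows "((\<lambda>T. y ^ nnodes T) has_sum G) UNIV"
    and "((\<lambda>q. y ^ nnodes (NN q)) has_sum (G - 1)) UNIV"
    and "G = 1 + y * G\<^sup>2" and "\<bar>G\<bar> \<le> 2"
proof -
  have ns: "(\<lambda>T. norm (y ^ nnodes T)) summable_on UNIV"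
    using cat_summable(1)[of "\<bar>y\<bar>"] assms by (simp add: power_abs)
  then have sm: "(\<lambda>T. y ^ nnodes T) summable_on UNIV"
    by (rule abs_summable_summable)
  then show hG: "((\<lambda>T. y ^ nnodes T) has_sum G) UNIV"
    by (simp add: G_def)
  have "(\<lambda>z. norm ((\<lambda>(l,r). y ^ nnodes l * y ^ nnodes r) z)) summable_on UNIV \<times> UNIV"
    by (rule abs_summable_prod[OF ns ns])
  then have "(\<lambda>(l,r). y ^ nnodes l * y ^ nnodes r) summable_on UNIV \<times> UNIV"
    by (rule abs_summable_summable)
  then have "((\<lambda>(l,r). y ^ nnodes l * y ^ nnodes r) has_sum G * G) (UNIV \<times> UNIV)"
    by (rule has_sum_prod[OF hG hG])
  then have "((\<lambda>z. y * (\<lambda>(l,r). y ^ nnodes l * y ^ nnodes r) z) has_sum y * (G * G)) UNIV"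
    by (intro has_sum_cmult_right) simp
  moreover have "(\<lambda>z. y * (\<lambda>(l,r). y ^ nnodes l * y ^ nnodes r) z) = (\<lambda>q. y ^ nnodes (NN q))"
    by (auto simp: power_add)
  ultimately have h1: "((\<lambda>q. y ^ nnodes (NN q)) has_sum y * (G * G)) UNIV" by simp
  then have "((\<lambda>T. y ^ nnodes T) has_sum (1 + y * (G * G))) UNIV"
    using has_sum_decomp[of "\<lambda>T. y ^ nnodes T"] by (simp add: o_def)
  then show eq: "G = 1 + y * G\<^sup>2"
    using hG has_sum_unique by (fastforce simp: power2_eq_square)
  show "((\<lambda>q. y ^ nnodes (NN q)) has_sum (G - 1)) UNIV"
  proof -
    have "G - 1 = y * (G * G)" using eq by (simp add: power2_eq_square)
    then show ?thesis using h1 by simp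
  qed
  have "norm G \<le> infsum (\<lambda>T. norm (y ^ nnodes T)) UNIV"
    unfolding G_def by (rule norm_infsum_bound[OF ns])
  also have "\<dots> \<le> 2"
    using cat_summable(2)[of "\<bar>y\<bar>"] assms by (simp add: power_abs)
  finally show "\<bar>G\<bar> \<le> 2" by simp
qed


definition pw :: "real \<Rightarrow> real \<Rightarrow> btree \<times> btree \<Rightarrow> real" where
  "pw t x z = t ^ (h (fst z) (snd z) + h (snd z) (fst z)) * x ^ (nnodes (fst z) + nnodes (snd z))"

lemma pairs:
  fixes t x :: real
  assumes c: "max 1 \<bar>t\<bar> * \<bar>x\<bar> \<le> 1/4"
  defines "F \<equiv> infsum (pw t x) UNIV"
  defines "G \<equiv> infsum (\<lambda>T. (t*x) ^ nnodes T) UNIV"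
  shows "(pw t x has_sum F) UNIV" and "F = 2 * G - 1 + x\<^sup>2 * F\<^sup>2" and "\<bar>F\<bar> \<le> 4"
proof -
  define M where "M = max 1 \<bar>t\<bar>"
  define c where "c = M * \<bar>x\<bar>"
  have M1: "1 \<le> M" by (simp add: M_def)
  have c0: "0 \<le> c" "c \<le> 1/4" using c M1 by (auto simp: c_def M_def)
  have bnd: "norm (pw t x z) \<le> c ^ nnodes (fst z) * c ^ nnodes (snd z)" for z
  proof -
    obtain a b where z: "z = (a,b)" by force
    have k: "h a b + h b a \<le> nnodes a + nnodes b" using h_le[of a b] h_le[of b a] by simp
    have "\<bar>t\<bar> ^ (h a b + h b a) \<le> M ^ (h a b + h b a)"
      by (rule power_mono) (auto simp: M_def)
    also have "\<dots> \<le> M ^ (nnodes a + nnodes b)"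
      by (rule power_increasing[OF k M1])
    finally have "\<bar>t\<bar> ^ (h a b + h b a) * \<bar>x\<bar> ^ (nnodes a + nnodes b) \<le> M ^ (nnodes a + nnodes b) * \<bar>x\<bar> ^ (nnodes a + nnodes b)"
      by (rule mult_right_mono) simp
    then show ?thesis
      by (simp add: z pw_def abs_mult power_abs c_def power_mult_distrib power_add mult_ac)
  qed
  have nc: "(\<lambda>T. norm (c ^ nnodes T)) summable_on UNIV"
    using cat_summable(1)[OF c0] c0 by simp
  have "(\<lambda>z. norm ((\<lambda>(l,r). c ^ nnodes l * c ^ nnodes r) z)) summable_on UNIV \<times> UNIV"
    by (rule abs_summable_prod[OF nc nc])
  then have smc: "(\<lambda>z. c ^ nnodes (fst z) * c ^ nnodes (snd z)) summable_on UNIV"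
    using c0 by (simp add: case_prod_beta abs_mult)
  have np: "(\<lambda>z. norm (pw t x z)) summable_on UNIV"
    by (rule summable_on_comparison_test[OF smc]) (use bnd in auto)
  then have "pw t x summable_on UNIV" by (rule abs_summable_summable)
  then show hF: "(pw t x has_sum F) UNIV" by (simp add: F_def)
  have "norm F \<le> infsum (\<lambda>z. norm (pw t x z)) UNIV"
    unfolding F_def by (rule norm_infsum_bound[OF np])
  also have "\<dots> \<le> infsum (\<lambda>z. c ^ nnodes (fst z) * c ^ nnodes (snd z)) UNIV"
    by (rule infsum_mono[OF np smc]) (use bnd in auto)
  also have "\<dots> = infsum (\<lambda>T. c ^ nnodes T) UNIV * infsum (\<lambda>T. c ^ nnodes T) UNIV"
  proof -
    have hc: "((\<lambda>T. c ^ nnodes T) has_sum infsum (\<lambda>T. c ^ nnodes T) UNIV) UNIV"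
      using cat_summable(1)[OF c0] by simp
    have "((\<lambda>(l,r). c ^ nnodes l * c ^ nnodes r) has_sum infsum (\<lambda>T. c ^ nnodes T) UNIV * infsum (\<lambda>T. c ^ nnodes T) UNIV) (UNIV \<times> UNIV)"
      by (rule has_sum_prod[OF hc hc]) (use smc in \<open>simp add: case_prod_unfold\<close>)
    then show ?thesis by (simp add: case_prod_unfold has_sum_iff)
  qed
  also have "\<dots> \<le> 2 * 2"
    using cat_summable(2)[OF c0] c0 by (intro mult_mono) (auto intro: infsum_nonneg)
  finally show "\<bar>F\<bar> \<le> 4" by simp
  have y: "\<bar>t * x\<bar> \<le> 1/4"
  proof -
    have "\<bar>t * x\<bar> \<le> M * \<bar>x\<bar>" by (auto simp: abs_mult M_def intro: mult_right_mono)
    then show ?thesis using c0 c_def by simp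
  qed
  note cat = catalan[OF y, folded G_def]
  define S1 where "S1 = {(E,E)}"
  define S2 where "S2 = (\<lambda>q. (E, NN q)) ` UNIV"
  define S3 where "S3 = (\<lambda>q. (NN q, E)) ` UNIV"
  define phi :: "(btree \<times> btree) \<times> (btree \<times> btree) \<Rightarrow> btree \<times> btree" where
    "phi = (\<lambda>((a1,b2),(a2,b1)). (N a1 a2, N b1 b2))"
  define S4 where "S4 = phi ` UNIV"
  have h1: "(pw t x has_sum 1) S1"
    by (rule has_sum_finiteI) (auto simp: S1_def pw_def)
  have h2: "(pw t x has_sum (G - 1)) S2"
  proof -
    have "inj (\<lambda>q. (E, NN q))" by (auto simp: inj_def)
    moreover have "pw t x \<circ> (\<lambda>q. (E, NN q)) = (\<lambda>q. (t*x) ^ nnodes (NN q))"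
      by (auto simp: pw_def power_mult_distrib simp del: nnodes_N)
    ultimately show ?thesis using cat(2) has_sum_reindex unfolding S2_def by metis
  qed
  have h3: "(pw t x has_sum (G - 1)) S3"
  proof -
    have "inj (\<lambda>q. (NN q, E))" by (auto simp: inj_def)
    moreover have "pw t x \<circ> (\<lambda>q. (NN q, E)) = (\<lambda>q. (t*x) ^ nnodes (NN q))"
      by (auto simp: pw_def power_mult_distrib simp del: nnodes_N)
    ultimately show ?thesis using cat(2) has_sum_reindex unfolding S3_def by metis
  qed
  have h4: "(pw t x has_sum (x\<^sup>2 * (F * F))) S4"
  proof -
    have "inj phi" by (auto simp: inj_def phi_def)
    moreover have "pw t x \<circ> phi = (\<lambda>z. x\<^sup>2 * (\<lambda>(u,v). pw t x u * pw t x v) z)"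
      by (auto simp: pw_def phi_def h_NN power_add power2_eq_square mult_ac)
    moreover have "((\<lambda>z. x\<^sup>2 * (\<lambda>(u,v). pw t x u * pw t x v) z) has_sum (x\<^sup>2 * (F * F))) UNIV"
    proof -
      have "(\<lambda>z. norm ((\<lambda>(u,v). pw t x u * pw t x v) z)) summable_on UNIV \<times> UNIV"
        by (rule abs_summable_prod[OF np np])
      then have "(\<lambda>(u,v). pw t x u * pw t x v) summable_on UNIV \<times> UNIV"
        by (rule abs_summable_summable)
      then have "((\<lambda>(u,v). pw t x u * pw t x v) has_sum F * F) (UNIV \<times> UNIV)"
        by (rule has_sum_prod[OF hF hF])
      then show ?thesis by (intro has_sum_cmult_right) simp
    qed
    ultimately show ?thesis using has_sum_reindex unfolding S4_def by metis
  qed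
  have U: "UNIV = S1 \<union> S2 \<union> S3 \<union> S4"
  proof -
    have "z \<in> S1 \<union> S2 \<union> S3 \<union> S4" for z
    proof -
      obtain a b where z: "z = (a,b)" by force
      show ?thesis
      proof (cases a; cases b)
        fix a1 a2 b1 b2 assume "a = N a1 a2" "b = N b1 b2"
        then have "z = phi ((a1,b2),(a2,b1))" by (simp add: z phi_def)
        then show ?thesis by (simp add: S4_def)
      qed (auto simp: z S1_def S2_def S3_def image_iff)
    qed
    then show ?thesis by auto
  qed
  have "(pw t x has_sum (1 + (G - 1) + (G - 1) + x\<^sup>2 * (F * F))) (S1 \<union> S2 \<union> S3 \<union> S4)"
    by (intro has_sum_Un_disjoint h1 h2 h3 h4)
       (auto simp: S1_def S2_def S3_def S4_def phi_def split: prod.splits)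
  then have "(pw t x has_sum (1 + (G - 1) + (G - 1) + x\<^sup>2 * (F * F))) UNIV"
    using U by simp
  then show "F = 2 * G - 1 + x\<^sup>2 * F\<^sup>2"
    using hF has_sum_unique by (fastforce simp: power2_eq_square)
qed


theorem theorem4p1:
  fixes t :: real
  assumes "t \<noteq> 0"
  shows "\<exists>r>0. \<forall>x::real. \<bar>x\<bar> < r \<longrightarrow>
    ((\<lambda>T. t ^ da T * x ^ nnodes T) has_sum
      (1 + (1 - sqrt (1 + 4 * x * (x - (1 - sqrt (1 - 4 * t * x)) / t))) / (2 * x))) UNIV"
proof -
  define M where "M = max 1 \<bar>t\<bar>"
  have M1: "1 \<le> M" by (simp add: M_def)
  show ?thesis
  proof (intro exI[of _ "1 / (4 * M)"] conjI allI impI)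
    show "0 < 1 / (4 * M)" using M1 by simp
    fix x :: real
    assume x: "\<bar>x\<bar> < 1 / (4 * M)"
    have cM: "M * \<bar>x\<bar> \<le> 1/4"
      using x M1 by (simp add: field_simps)
    have x4: "\<bar>x\<bar> \<le> 1/4"
    proof -
      have "\<bar>x\<bar> \<le> M * \<bar>x\<bar>" using mult_right_mono[OF M1, of "\<bar>x\<bar>"] by simp
      then show ?thesis using cM by simp
    qed
    have y: "\<bar>t * x\<bar> \<le> 1/4"
    proof -
      have "\<bar>t * x\<bar> \<le> M * \<bar>x\<bar>" by (auto simp: abs_mult M_def intro: mult_right_mono)
      then show ?thesis using cM by simp
    qed
    define F where "F = infsum (pw t x) UNIV"
    define G where "G = infsum (\<lambda>T. (t*x) ^ nnodes T) UNIV"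
    note P = pairs[OF cM[unfolded M_def], folded F_def G_def]
    note C = catalan[OF y, folded G_def]
    have "((\<lambda>T. t ^ da T * x ^ nnodes T) \<circ> NN) = (\<lambda>z. x * pw t x z)"
      by (auto simp: pw_def da_N)
    then have "(((\<lambda>T. t ^ da T * x ^ nnodes T) \<circ> NN) has_sum x * F) UNIV"
      using has_sum_cmult_right[OF P(1), of x] by simp
    then have hsN: "(((\<lambda>T. t ^ da T * x ^ nnodes T) \<circ> NN) has_sum x * F) UNIV" .
    have hs: "((\<lambda>T. t ^ da T * x ^ nnodes T) has_sum (1 + x * F)) UNIV"
    proof -
      have "da E = 0" by (simp add: da_def)
      then show ?thesis using has_sum_decomp[OF hsN] by simp
    qed
    have s1: "sqrt (1 - 4 * t * x) = 1 - 2 * (t * x) * G"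
    proof -
      have "\<bar>2 * (t * x) * G\<bar> \<le> 2 * (1/4) * 2"
        unfolding abs_mult using y C(4) by (intro mult_mono) (auto simp: abs_mult)
      then have nn: "0 \<le> 1 - 2 * (t * x) * G" by simp
      have "(1 - 2 * (t * x) * G)\<^sup>2 = 1 - 4 * t * x"
      proof -
        have "(1 - 2 * (t * x) * G)\<^sup>2 = 1 - 4 * (t * x) * G + 4 * (t * x) * ((t * x) * G\<^sup>2)"
          by (simp add: power2_eq_square algebra_simps)
        also have "(t * x) * G\<^sup>2 = G - 1" using C(3) by simp
        finally show ?thesis by (simp add: algebra_simps)
      qed
      then show ?thesis using nn by (metis real_sqrt_abs abs_of_nonneg)
    qed
    have e1: "(1 - sqrt (1 - 4 * t * x)) / t = 2 * x * G"
      unfolding s1 using assms by (simp add: field_simps)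
    have s2: "sqrt (1 + 4 * x * (x - 2 * x * G)) = 1 - 2 * x\<^sup>2 * F"
    proof -
      have "x\<^sup>2 \<le> (1/4)\<^sup>2" using x4 by (metis abs_ge_zero power2_abs power_mono)
      then have "\<bar>2 * x\<^sup>2 * F\<bar> \<le> 2 * (1/4)\<^sup>2 * 4"
        unfolding abs_mult using P(3) \<open>x\<^sup>2 \<le> (1/4)\<^sup>2\<close> by (intro mult_mono) auto
      then have nn: "0 \<le> 1 - 2 * x\<^sup>2 * F" by (simp add: power2_eq_square abs_le_iff)
      have "(1 - 2 * x\<^sup>2 * F)\<^sup>2 = 1 + 4 * x * (x - 2 * x * G)"
      proof -
        have "(1 - 2 * x\<^sup>2 * F)\<^sup>2 = 1 - 4 * x\<^sup>2 * F + 4 * x\<^sup>2 * (x\<^sup>2 * F\<^sup>2)"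
          by (simp add: power2_eq_square algebra_simps)
        also have "x\<^sup>2 * F\<^sup>2 = F - 2 * G + 1" using P(2) by simp
        finally show ?thesis by (simp add: power2_eq_square algebra_simps)
      qed
      then show ?thesis using nn by (metis real_sqrt_abs abs_of_nonneg)
    qed
    have "1 + (1 - sqrt (1 + 4 * x * (x - (1 - sqrt (1 - 4 * t * x)) / t))) / (2 * x) = 1 + x * F"
      unfolding e1 s2 by (cases "x = 0") (simp_all add: power2_eq_square field_simps)
    then show "((\<lambda>T. t ^ da T * x ^ nnodes T) has_sum
      (1 + (1 - sqrt (1 + 4 * x * (x - (1 - sqrt (1 - 4 * t * x)) / t))) / (2 * x))) UNIV"
      using hs by simp
  qed
qed

end
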